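(* Let $N\ge1$, $n\ge1$, $\gamma>0$, and let channel gains $g_{S,k}>0$, $g_{k,D}>0$ ($k=1,\dots,N$) satisfy $g_{S,1}\le\cdots\le g_{S,N}$. With $C_{a,b}=\tfrac12\log(1+g_{a,b}\gamma)$ and $V_{a,b}=V(g_{a,b}\gamma)$, $V(\rho)=\frac{\rho}{2}\frac{2+\rho}{(1+\rho)^2}(\log e)^2$, define for $1\le i\le N$, $1\le j\le N$: $$a_{ij}=\sqrt{\tfrac{V_{S,i}}{V_{S,j}}},\quad b_{ij}=\sqrt{\tfrac{n}{V_{S,j}}}(C_{S,j}-C_{S,i}),\quad a_{i(N+1)}=\sqrt{\tfrac{V_{S,i}}{V_{i,D}}},\quad b_{i(N+1)}=\sqrt{\tfrac{n}{V_{i,D}}}(C_{i,D}-C_{S,i}),\quad c_i=\sqrt{V_{S,i}}.$$ Let $\varepsilon_d'\in(0,\tfrac12)$ and let $v_0$ be the optimal objective value of the problem $$\min \sum_{i=1}^N c_ix_i\quad\text{s.t.}\quad \sum_{i=1}^N\sum_{j=i}^{N+1}Q(a_{ij}x_i+b_{ij})-\varepsilon_d'=0,\quad x_i\ge0\ (i=1,\dots,N).$$ Let $x_1\in\mathbb{R}$ be the solution of $\sum_{i=1}^N\sum_{j=i}^{N+1}Q(a_{ij}x+b_{ij})-\varepsilon_d'=0$. Then $$v_1\le v_0\le v_2,\qquad v_1=Q^{-1}(\varepsilon_d')\sum_{i=1}^N c_i,\quad v_2=x_1\sum_{i=1}^N c_i.$$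
   Context: $Q(x)=\int_x^\infty\frac{1}{\sqrt{2\pi}}e^{-t^2/2}\,dt$ is the Gaussian tail function and $Q^{-1}$ its inverse. $S$ denotes the source, $D$ the destination, $1,\dots,N$ the relays, $g_{a,b}$ the channel gain of link $a\to b$, $\gamma$ the transmit SNR and $n$ the blocklength; $C_{a,b}$ and $V_{a,b}$ are the capacity and channel dispersion of the corresponding real AWGN link. *)

theory Defs
  imports "HOL-Probability.Probability"
begin

definition Qf :: "real \<Rightarrow> real" where
  "Qf x = (LBINT t:{x..}. std_normal_density t)"

definition Qinv :: "real \<Rightarrow> real" where
  "Qinv e = (THE x. Qf x = e)"

definition Cap :: "real \<Rightarrow> real" where
  "Cap \<rho> = 1/2 * log 2 (1 + \<rho>)"

definition Vdisp :: "real \<Rightarrow> real" where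
  "Vdisp \<rho> = \<rho> / 2 * ((2 + \<rho>) / (1 + \<rho>)^2) * (log 2 (exp 1))^2"

definition acoef :: "nat \<Rightarrow> real \<Rightarrow> (nat \<Rightarrow> real) \<Rightarrow> (nat \<Rightarrow> real) \<Rightarrow> nat \<Rightarrow> nat \<Rightarrow> real" where
  "acoef N \<gamma> gS gD i j =
     (if j = N + 1 then sqrt (Vdisp (gS i * \<gamma>) / Vdisp (gD i * \<gamma>))
      else sqrt (Vdisp (gS i * \<gamma>) / Vdisp (gS j * \<gamma>)))"

definition bcoef :: "nat \<Rightarrow> nat \<Rightarrow> real \<Rightarrow> (nat \<Rightarrow> real) \<Rightarrow> (nat \<Rightarrow> real) \<Rightarrow> nat \<Rightarrow> nat \<Rightarrow> real" where
  "bcoef N n \<gamma> gS gD i j =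
     (if j = N + 1 then sqrt (real n / Vdisp (gD i * \<gamma>)) * (Cap (gD i * \<gamma>) - Cap (gS i * \<gamma>))
      else sqrt (real n / Vdisp (gS j * \<gamma>)) * (Cap (gS j * \<gamma>) - Cap (gS i * \<gamma>)))"

definition ccoef :: "real \<Rightarrow> (nat \<Rightarrow> real) \<Rightarrow> nat \<Rightarrow> real" where
  "ccoef \<gamma> gS i = sqrt (Vdisp (gS i * \<gamma>))"

definition cstr :: "nat \<Rightarrow> nat \<Rightarrow> real \<Rightarrow> (nat \<Rightarrow> real) \<Rightarrow> (nat \<Rightarrow> real) \<Rightarrow> real \<Rightarrow> (nat \<Rightarrow> real) \<Rightarrow> real" where
  "cstr N n \<gamma> gS gD \<epsilon> x =
     (\<Sum>i=1..N. \<Sum>j=i..N+1. Qf (acoef N \<gamma> gS gD i j * x i + bcoef N n \<gamma> gS gD i j)) - \<epsilon>"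

definition v0 :: "nat \<Rightarrow> nat \<Rightarrow> real \<Rightarrow> (nat \<Rightarrow> real) \<Rightarrow> (nat \<Rightarrow> real) \<Rightarrow> real \<Rightarrow> real" where
  "v0 N n \<gamma> gS gD \<epsilon> =
     Inf {(\<Sum>i=1..N. ccoef \<gamma> gS i * x i) | x.
            cstr N n \<gamma> gS gD \<epsilon> x = 0 \<and> (\<forall>i\<in>{1..N}. x i \<ge> 0)}"

definition xone :: "nat \<Rightarrow> nat \<Rightarrow> real \<Rightarrow> (nat \<Rightarrow> real) \<Rightarrow> (nat \<Rightarrow> real) \<Rightarrow> real \<Rightarrow> real" where
  "xone N n \<gamma> gS gD \<epsilon> = (THE t. cstr N n \<gamma> gS gD \<epsilon> (\<lambda>_. t) = 0)"

end

theory Submission imports Defs begin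

lemma snd_int: "integrable lborel std_normal_density"
  using integrable_std_normal_moment[of 0] by simp

lemma snd_total: "(LBINT t. std_normal_density t) = 1"
  using integral_std_normal_moment_even[of 0] by simp

lemma snd_pos: "std_normal_density t > 0"
  by (simp add: std_normal_density_def)

lemma snd_cont: "isCont std_normal_density t"
  unfolding std_normal_density_def by (intro continuous_intros) auto

lemma snd_setint: "set_integrable lborel A std_normal_density" if "A \<in> sets lborel"
  unfolding set_integrable_def using integrable_mult_indicator[OF that snd_int] by simp

lemma Qf_Ioi: "Qf x = (LBINT t=ereal x..\<infinity>. std_normal_density t)"
  unfolding Qf_def interval_integral_to_infinity_eq
  by (rule set_integral_discrete_difference[where X="{x}"]) auto

lemma Qf_split: "Qf x = Qf 0 - (LBINT t=ereal 0..ereal x. std_normal_density t)"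
proof -
  have "(LBINT t=ereal 0..ereal x. std_normal_density t) + (LBINT t=ereal x..\<infinity>. std_normal_density t)
     = (LBINT t=ereal 0..\<infinity>. std_normal_density t)"
    by (rule interval_integral_sum) (simp add: interval_lebesgue_integrable_def snd_setint)
  then show ?thesis using Qf_Ioi[of x] Qf_Ioi[of 0] by (simp add: zero_ereal_def)
qed

lemma Qf_deriv: "(Qf has_real_derivative - std_normal_density x) (at x)"
proof -
  have "(at x within {min 0 (x - 1)..max 0 (x + 1)}) = at x"
    by (intro at_within_interior) auto
  moreover have "min 0 (x - 1) \<le> x" "x \<le> max 0 (x + 1)"
    by auto
  ultimately have "((\<lambda>u. LBINT y=ereal 0..ereal u. std_normal_density y) has_real_derivative std_normal_density x) (at x)"
    using interval_integral_FTC2[of "min 0 (x - 1)" 0 "max 0 (x + 1)" std_normal_density x]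
    by (auto simp: continuous_at_imp_continuous_on snd_cont
                   has_real_derivative_iff_has_vector_derivative)
  then have "((\<lambda>u. Qf 0 - (LBINT y=ereal 0..ereal u. std_normal_density y)) has_real_derivative - std_normal_density x) (at x)"
    by (auto intro!: derivative_eq_intros)
  moreover have "(\<lambda>u. Qf 0 - (LBINT y=ereal 0..ereal u. std_normal_density y)) = Qf"
    by (rule ext) (rule Qf_split[symmetric])
  ultimately show ?thesis by simp
qed

lemma Qf_strict: assumes "x < y" shows "Qf y < Qf x"
proof (rule DERIV_neg_imp_decreasing[OF assms])
  fix t :: real
  show "\<exists>d. (Qf has_real_derivative d) (at t) \<and> d < 0"
    using Qf_deriv[of t] snd_pos[of t] by (intro exI[of _ "- std_normal_density t"]) simp
qed

lemma Qf_cont: "isCont Qf x"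
  using Qf_deriv by (rule DERIV_isCont)

lemma Qf_nonneg: "Qf x \<ge> 0"
  unfolding Qf_def set_lebesgue_integral_def
  by (rule Bochner_Integration.integral_nonneg) (simp add: less_imp_le[OF snd_pos] indicator_def)

lemma Qf_half: "Qf 0 = 1/2"
proof -
  have sym: "std_normal_density (-t) = std_normal_density t" for t
    by (simp add: std_normal_density_def)
  have a: "Qf 0 = (LBINT t:{..0}. std_normal_density t)"
    unfolding Qf_def by (subst set_integral_reflect) (simp add: sym atMost_def)
  have b: "(LBINT t:{..0}. std_normal_density t) = (LBINT t:{..<0}. std_normal_density t)"
    by (rule set_integral_discrete_difference[where X="{0}"]) auto
  have "(LBINT t:{0..}. std_normal_density t) + (LBINT t:{..<0}. std_normal_density t)
      = (LBINT t:({0..} \<union> {..<0}). std_normal_density t)"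
    by (rule set_integral_Un[symmetric]) (auto simp: snd_setint)
  also have "({0..} \<union> {..<0}) = (UNIV::real set)" by auto
  also have "(LBINT t:UNIV. std_normal_density t) = 1"
    using snd_total by (simp add: set_lebesgue_integral_def)
  finally show ?thesis using a b unfolding Qf_def by simp
qed

lemma Qf_top: "(Qf \<longlongrightarrow> 0) at_top"
proof -
  have "((\<lambda>b. LBINT t:{0..b}. std_normal_density t) \<longlongrightarrow> (LBINT t:{0..}. std_normal_density t)) at_top"
    by (rule tendsto_set_lebesgue_integral_at_top) (auto simp: snd_setint)
  then have "((\<lambda>b. Qf 0 - (LBINT t:{0..b}. std_normal_density t)) \<longlongrightarrow> 0) at_top"
    unfolding Qf_def using tendsto_diff[OF tendsto_const[of "LBINT t:{0..}. std_normal_density t"]] by fastforce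
  moreover have "\<forall>\<^sub>F b in at_top. Qf 0 - (LBINT t:{0..b}. std_normal_density t) = Qf b"
    using eventually_ge_at_top[of "0::real"]
    by eventually_elim (subst Qf_split, simp add: interval_integral_Icc zero_ereal_def)
  ultimately show ?thesis by (rule Lim_transform_eventually)
qed

lemma Qf_le_imp: "Qf a \<le> Qf b \<Longrightarrow> b \<le> a"
  using Qf_strict[of a b] by (cases "a < b") auto

lemma Qf_inj: "Qf a = Qf b \<Longrightarrow> a = b"
  using Qf_le_imp[of a b] Qf_le_imp[of b a] by auto

lemma Qf_small: assumes "e > 0" shows "\<exists>b\<ge>0. Qf b < e"
proof -
  have "\<forall>\<^sub>F b in at_top. Qf b < e"
    using Qf_top assms by (rule order_tendstoD)
  then obtain b where "\<forall>x\<ge>b. Qf x < e" by (auto simp: eventually_at_top_linorder)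
  then have "Qf (max b 0) < e" by simp
  then show ?thesis by (intro exI[of _ "max b 0"]) simp
qed

lemma Qinv_eq: assumes "0 < e" "e < 1/2" shows "Qf (Qinv e) = e"
proof -
  obtain b where b: "b \<ge> 0" "Qf b < e" using Qf_small assms by blast
  have "\<exists>x. 0 \<le> x \<and> x \<le> b \<and> Qf x = e"
    by (rule IVT2[of Qf b e 0]) (use b assms in \<open>simp_all add: Qf_half Qf_cont\<close>)
  then obtain x where "Qf x = e" by blast
  have "Qf (THE x. Qf x = e) = e"
  proof (rule theI[of _ x])
    show "Qf x = e" by fact
    fix y assume "Qf y = e"
    then show "y = x" using \<open>Qf x = e\<close> Qf_inj[of y x] by simp
  qed
  then show ?thesis unfolding Qinv_def .
qed

lemma Vdisp_pos: "\<rho> > 0 \<Longrightarrow> Vdisp \<rho> > 0"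
proof -
  assume r: "\<rho> > 0"
  have l: "log 2 (exp 1) > 0" by (simp add: log_def)
  have a: "\<rho> / 2 > 0" using r by simp
  have b: "(2 + \<rho>) / (1 + \<rho>)^2 > 0" using r by (intro divide_pos_pos) simp_all
  have c: "(log 2 (exp 1))^2 > 0" using l by simp
  show ?thesis unfolding Vdisp_def by (intro mult_pos_pos a b c)
qed

lemma lim_aff: assumes "(a::real) > 0" shows "((\<lambda>t. Qf (a * t + b)) \<longlongrightarrow> 0) at_top"
proof -
  have "filterlim (\<lambda>t. a * t) at_top at_top"
    using assms by (intro filterlim_tendsto_pos_mult_at_top[OF tendsto_const] filterlim_ident)
  then have "filterlim (\<lambda>t. b + a * t) at_top at_top"
    by (rule filterlim_tendsto_add_at_top[OF tendsto_const])
  moreover have "(\<lambda>t. a * t + b) = (\<lambda>t. b + a * t)" by (rule ext) simp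
  ultimately have "filterlim (\<lambda>t. a * t + b) at_top at_top"
    by simp
  then show ?thesis by (rule filterlim_compose[OF Qf_top])
qed

theorem lemma4:
  fixes N n :: nat and \<gamma> \<epsilon> :: real and gS gD :: "nat \<Rightarrow> real"
  assumes "N \<ge> 1" and "n \<ge> 1" and "\<gamma> > 0"
    and "\<And>k. k \<in> {1..N} \<Longrightarrow> gS k > 0"
    and "\<And>k. k \<in> {1..N} \<Longrightarrow> gD k > 0"
    and "\<And>k l. 1 \<le> k \<Longrightarrow> k \<le> l \<Longrightarrow> l \<le> N \<Longrightarrow> gS k \<le> gS l"
    and "0 < \<epsilon>" and "\<epsilon> < 1/2"
  shows "Qinv \<epsilon> * (\<Sum>i=1..N. ccoef \<gamma> gS i) \<le> v0 N n \<gamma> gS gD \<epsilon>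
       \<and> v0 N n \<gamma> gS gD \<epsilon> \<le> xone N n \<gamma> gS gD \<epsilon> * (\<Sum>i=1..N. ccoef \<gamma> gS i)"
proof -
  define A where "A = acoef N \<gamma> gS gD"
  define B where "B = bcoef N n \<gamma> gS gD"
  define c where "c = ccoef \<gamma> gS"
  define S where "S = (\<lambda>t. \<Sum>i=1..N. \<Sum>j=i..N+1. Qf (A i j * t + B i j))"
  have cs: "cstr N n \<gamma> gS gD \<epsilon> x = (\<Sum>i=1..N. \<Sum>j=i..N+1. Qf (A i j * x i + B i j)) - \<epsilon>" for x
    unfolding cstr_def A_def B_def by simp
  have cst: "cstr N n \<gamma> gS gD \<epsilon> (\<lambda>_. t) = S t - \<epsilon>" for t
    unfolding cs S_def by simp
  have Apos: "A i j > 0" if "1 \<le> i" "i \<le> N" "i \<le> j" "j \<le> N + 1" for i j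
  proof -
    have p1: "Vdisp (gS i * \<gamma>) > 0" using that assms by (intro Vdisp_pos mult_pos_pos) auto
    show ?thesis
    proof (cases "j = N + 1")
      case True
      have "Vdisp (gD i * \<gamma>) > 0" using that assms True by (intro Vdisp_pos mult_pos_pos) auto
      then show ?thesis using p1 True by (simp add: A_def acoef_def)
    next
      case False
      have "Vdisp (gS j * \<gamma>) > 0" using that assms False by (intro Vdisp_pos mult_pos_pos) auto
      then show ?thesis using p1 False by (simp add: A_def acoef_def)
    qed
  qed
  have Aii: "A i i = 1" and Bii: "B i i = 0" if "1 \<le> i" "i \<le> N" for i
  proof -
    have "Vdisp (gS i * \<gamma>) > 0" using that assms by (intro Vdisp_pos mult_pos_pos) auto
    then show "A i i = 1" "B i i = 0" using that by (auto simp: A_def B_def acoef_def bcoef_def)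
  qed
  have cnn: "c i \<ge> 0" if "i \<in> {1..N}" for i
  proof -
    have "Vdisp (gS i * \<gamma>) > 0" using that assms by (intro Vdisp_pos mult_pos_pos) auto
    then show ?thesis by (simp add: c_def ccoef_def)
  qed
  have term_le: "Qf (x i) \<le> (\<Sum>i=1..N. \<Sum>j=i..N+1. Qf (A i j * x i + B i j))"
    if "i \<in> {1..N}" for x i
  proof -
    have "Qf (x i) = Qf (A i i * x i + B i i)" using that Aii Bii by simp
    also have "\<dots> \<le> (\<Sum>j=i..N+1. Qf (A i j * x i + B i j))"
      using that by (intro member_le_sum) (auto simp: Qf_nonneg)
    also have "\<dots> \<le> (\<Sum>i=1..N. \<Sum>j=i..N+1. Qf (A i j * x i + B i j))"
      using that by (intro member_le_sum[where f="\<lambda>i. \<Sum>j=i..N+1. Qf (A i j * x i + B i j)"])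
        (auto intro!: sum_nonneg add_nonneg_nonneg simp: Qf_nonneg)
    finally show ?thesis .
  qed
  have S0: "S 0 > \<epsilon>"
    using term_le[of 1 "\<lambda>_. 0"] assms Qf_half unfolding S_def by simp
  have Scont: "isCont S t" for t
    unfolding S_def by (intro continuous_intros isCont_o2[OF _ Qf_cont])
  have Sstrict: "S u < S t" if "t < u" for t u
    unfolding S_def
  proof (rule sum_strict_mono)
    fix i assume i: "i \<in> {1..N}"
    show "(\<Sum>j=i..N+1. Qf (A i j * u + B i j)) < (\<Sum>j=i..N+1. Qf (A i j * t + B i j))"
    proof (rule sum_strict_mono)
      fix j assume j: "j \<in> {i..N+1}"
      then have "A i j > 0" using i by (intro Apos) auto
      then show "Qf (A i j * u + B i j) < Qf (A i j * t + B i j)"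
        using that by (intro Qf_strict) simp
    qed (use i in auto)
  qed (use assms in auto)
  have Slim: "(S \<longlongrightarrow> 0) at_top"
  proof -
    have "((\<lambda>t. \<Sum>i=1..N. \<Sum>j=i..N+1. Qf (A i j * t + B i j)) \<longlongrightarrow> (\<Sum>i=1..N. \<Sum>j=i..N+1. (0::real))) at_top"
      by (intro tendsto_sum lim_aff Apos) auto
    then show ?thesis unfolding S_def by simp
  qed
  obtain b where b: "b \<ge> 0" "S b < \<epsilon>"
  proof -
    have "\<forall>\<^sub>F b in at_top. S b < \<epsilon>" using Slim assms by (intro order_tendstoD) auto
    then obtain b where "\<forall>x\<ge>b. S x < \<epsilon>" by (auto simp: eventually_at_top_linorder)
    then show ?thesis using that[of "max b 0"] by auto
  qed
  obtain r where r: "0 \<le> r" "r \<le> b" "S r = \<epsilon>"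
  proof -
    have "\<exists>x. 0 \<le> x \<and> x \<le> b \<and> S x = \<epsilon>"
      by (rule IVT2[of S b \<epsilon> 0]) (use b S0 Scont in \<open>simp_all add: less_imp_le\<close>)
    then show ?thesis using that by blast
  qed
  have Sinj: "S t = S u \<Longrightarrow> t = u" for t u
    using Sstrict[of t u] Sstrict[of u t] by (cases t u rule: linorder_cases) auto
  have xr: "xone N n \<gamma> gS gD \<epsilon> = r"
    unfolding xone_def cst using r Sinj by (intro the_equality) auto
  define F where "F = {(\<Sum>i=1..N. ccoef \<gamma> gS i * x i) | x.
            cstr N n \<gamma> gS gD \<epsilon> x = 0 \<and> (\<forall>i\<in>{1..N}. x i \<ge> 0)}"
  have v0F: "v0 N n \<gamma> gS gD \<epsilon> = Inf F" unfolding v0_def F_def by simp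
  have memF: "r * (\<Sum>i=1..N. c i) \<in> F"
    unfolding F_def using r cst[of r]
    by (intro CollectI exI[of _ "\<lambda>_. r"]) (auto simp: c_def sum_distrib_left mult.commute)
  have lowF: "Qinv \<epsilon> * (\<Sum>i=1..N. c i) \<le> y" if "y \<in> F" for y
  proof -
    from that obtain x where y: "y = (\<Sum>i=1..N. c i * x i)"
      and cx: "cstr N n \<gamma> gS gD \<epsilon> x = 0" unfolding F_def c_def by auto
    have tot: "(\<Sum>i=1..N. \<Sum>j=i..N+1. Qf (A i j * x i + B i j)) = \<epsilon>" using cx cs by simp
    have "Qinv \<epsilon> \<le> x i" if "i \<in> {1..N}" for i
      using term_le[OF that, of x] tot Qinv_eq[of \<epsilon>] assms Qf_le_imp[of "x i" "Qinv \<epsilon>"] by simp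
    then have "(\<Sum>i=1..N. c i * Qinv \<epsilon>) \<le> (\<Sum>i=1..N. c i * x i)"
      by (intro sum_mono mult_left_mono cnn) auto
    moreover have "Qinv \<epsilon> * (\<Sum>i=1..N. c i) = (\<Sum>i=1..N. c i * Qinv \<epsilon>)"
      by (simp add: sum_distrib_left mult.commute)
    ultimately show ?thesis using y by simp
  qed
  have 1: "Qinv \<epsilon> * (\<Sum>i=1..N. c i) \<le> Inf F"
    using memF lowF by (intro cInf_greatest) auto
  have 2: "Inf F \<le> r * (\<Sum>i=1..N. c i)"
    using memF lowF by (intro cInf_lower) (auto simp: bdd_below_def)
  show ?thesis using 1 2 v0F xr unfolding c_def by simp
qed

end
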